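(* Let $g:\mathbb{R}^d\to\mathbb{C}$ be a function and let $A$ be a real invertible $d\times d$ matrix. Then: (i) If the series $\sum_{j=-\infty}^{\infty} g(A^j\gamma)$ converges for every $\gamma\in\mathbb{R}^d\setminus\{0\}$, then there exists a function $\varphi:\mathbb{R}^d\to\mathbb{C}$ such that $$g(\gamma)=\varphi(\gamma)-\varphi(A\gamma)\quad\text{for all }\gamma\in\mathbb{R}^d\setminus\{0\}. \qquad ( * )$$ (ii) Conversely, let $\varphi:\mathbb{R}^d\to\mathbb{C}$ be any function such that $( * )$ holds. Then for each fixed $\gamma\in\mathbb{R}^d\setminus\{0\}$, the series $\sum_{j=-\infty}^{\infty} g(A^j\gamma)$ converges if and only if both limits $\lim_{N\to\infty}\varphi(A^N\gamma)$ and $\lim_{N\to-\infty}\varphi(A^N\gamma)$ exist. (iii) Let $\varphi:\mathbb{R}^d\to\mathbb{C}$ be any function such that $( * )$ holds. Then $$\sum_{j=-\infty}^{\infty} g(A^j\gamma)=1\quad\text{for all }\gamma\in\mathbb{R}^d\setminus\{0\}$$ holds if and only if, for every $\gamma\in\mathbb{R}^d\setminus\{0\}$, both limits $\lim_{N\to\pm\infty}\varphi(A^N\gamma)$ exist and $$\lim_{N\to-\infty}\varphi(A^N\gamma)-\lim_{N\to\infty}\varphi(A^N\gamma)=1.$$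
   Context: Convergence of a bilateral series $\sum_{j=-\infty}^\infty a_j$ means that the partial sums $\sum_{j=-M}^{N} a_j$ converge as $M,N\to\infty$ (independently). *)

theory Defs
  imports "HOL-Analysis.Analysis"
begin

definition mat_int_pow_apply :: "real^'n^'n \<Rightarrow> int \<Rightarrow> real^'n \<Rightarrow> real^'n" where
  "mat_int_pow_apply A j x =
     (if 0 \<le> j then ((\<lambda>v. A *v v) ^^ nat j) x
      else ((\<lambda>v. matrix_inv A *v v) ^^ nat (- j)) x)"

definition bilateral_sums :: "(int \<Rightarrow> 'a::real_normed_vector) \<Rightarrow> 'a \<Rightarrow> bool" where
  "bilateral_sums a s \<longleftrightarrow>
     ((\<lambda>(M::nat, N::nat). \<Sum>j\<in>{- int M..int N}. a j) \<longlongrightarrow> s) (sequentially \<times>\<^sub>F sequentially)"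

definition bilateral_summable :: "(int \<Rightarrow> 'a::real_normed_vector) \<Rightarrow> bool" where
  "bilateral_summable a \<longleftrightarrow> (\<exists>s. bilateral_sums a s)"

end

theory Submission
  imports Defs
begin

lemma inv_props:
  fixes A :: "real^'n^'n"
  assumes "invertible A"
  shows "A ** matrix_inv A = mat 1 \<and> matrix_inv A ** A = mat 1"
  using assms unfolding invertible_def matrix_inv_def by (rule someI_ex)

lemma T_step:
  fixes A :: "real^'n^'n"
  assumes "invertible A"
  shows "mat_int_pow_apply A (j+1) x = A *v mat_int_pow_apply A j x"
proof (cases "0 \<le> j")
  case True
  then have "nat (j+1) = Suc (nat j)" by simp
  then show ?thesis using True by (simp add: mat_int_pow_apply_def)
next
  case False
  define k where "k = nat (-(j+1))"
  define B where "B = matrix_inv A"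
  have L: "mat_int_pow_apply A (j+1) x = ((\<lambda>v. B *v v) ^^ k) x"
    using False unfolding mat_int_pow_apply_def k_def B_def
    by (cases "j+1 = 0") auto
  have "nat (-j) = Suc k" using False k_def by simp
  then have R: "mat_int_pow_apply A j x = B *v (((\<lambda>v. B *v v) ^^ k) x)"
    using False unfolding mat_int_pow_apply_def B_def by simp
  show ?thesis unfolding L R using inv_props[OF assms]
    by (simp add: B_def matrix_vector_mul_assoc)
qed

lemma T_nonzero:
  fixes A :: "real^'n^'n"
  assumes "invertible A" "x \<noteq> 0"
  shows "mat_int_pow_apply A j x \<noteq> 0"
proof -
  have invB: "invertible (matrix_inv A)"
    using inv_props[OF assms(1)] unfolding invertible_def by blast
  have gen: "((\<lambda>v. C *v v) ^^ k) x \<noteq> 0" if "invertible C" for C :: "real^'n^'n" and k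
  proof (induction k)
    case 0 then show ?case using assms by simp
  next
    case (Suc k)
    have "inj ((*v) C)" by (rule inj_matrix_vector_mult[OF that])
    then have "C *v y = 0 \<Longrightarrow> y = 0" for y
      by (metis injD matrix_vector_mult_0_right)
    then show ?case using Suc by auto
  qed
  show ?thesis unfolding mat_int_pow_apply_def using gen[OF assms(1)] gen[OF invB] by simp
qed

lemma T_shift_nat:
  "mat_int_pow_apply A (int (Suc j)) x = mat_int_pow_apply A (int j) (A *v x)"
  unfolding mat_int_pow_apply_def
  by (simp only: nat_int of_nat_0_le_iff if_True funpow_Suc_right o_apply)

lemma T_zero: "mat_int_pow_apply A 0 x = x"
  unfolding mat_int_pow_apply_def by simp

lemma telescope_int:
  fixes b :: "int \<Rightarrow> 'a::ab_group_add"
  assumes "m \<le> n + 1"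
  shows "(\<Sum>j\<in>{m..n}. b j - b (j+1)) = b m - b (n+1)"
proof -
  have gen: "(\<Sum>j\<in>{m..m - 1 + int k}. b j - b (j+1)) = b m - b (m + int k)" for k
  proof (induction k)
    case 0 then show ?case by simp
  next
    case (Suc k)
    have "{m..m - 1 + int (Suc k)} = insert (m + int k) {m..m - 1 + int k}" by auto
    moreover have "m + int k \<notin> {m..m - 1 + int k}" by simp
    ultimately show ?case using Suc by (simp add: algebra_simps)
  qed
  have "n = m - 1 + int (nat (n - m + 1))" using assms by simp
  then show ?thesis using gen[of "nat (n - m + 1)"] assms by simp
qed

lemma split_sum:
  fixes a :: "int \<Rightarrow> 'a::comm_monoid_add"
  shows "(\<Sum>j\<in>{- int M..int N}. a j) = (\<Sum>j\<in>{- int M..-1}. a j) + (\<Sum>j\<le>N. a (int j))"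
proof -
  have "{- int M..int N} = {- int M..-1} \<union> {0..int N}" by auto
  then have "(\<Sum>j\<in>{- int M..int N}. a j) = (\<Sum>j\<in>{- int M..-1}. a j) + (\<Sum>j\<in>{0..int N}. a j)"
    by (simp add: sum.union_disjoint)
  moreover have "{0..int N} = int ` {..N}"
  proof (rule set_eqI)
    fix x show "x \<in> {0..int N} \<longleftrightarrow> x \<in> int ` {..N}"
    proof
      assume "x \<in> {0..int N}"
      then show "x \<in> int ` {..N}" by (intro image_eqI[where x="nat x"]) auto
    qed auto
  qed
  then have "(\<Sum>j\<in>{0..int N}. a j) = (\<Sum>j\<le>N. a (int j))"
    by (simp add: sum.reindex)
  ultimately show ?thesis by simp
qed

lemma core:
  fixes f h :: "nat \<Rightarrow> complex"
  shows "((\<lambda>(M, N). f M - h N) \<longlongrightarrow> s) (sequentially \<times>\<^sub>F sequentially) \<longleftrightarrow>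
         (\<exists>Lm Lp. f \<longlonglongrightarrow> Lm \<and> h \<longlonglongrightarrow> Lp \<and> s = Lm - Lp)"
proof
  have prod_lim: "((\<lambda>(M, N). f M - h N) \<longlongrightarrow> Lm - Lp) (sequentially \<times>\<^sub>F sequentially)"
    if "f \<longlonglongrightarrow> Lm" "h \<longlonglongrightarrow> Lp" for Lm Lp
  proof -
    have "((\<lambda>p. f (fst p)) \<longlongrightarrow> Lm) (sequentially \<times>\<^sub>F sequentially)"
      by (rule filterlim_compose[OF that(1) filterlim_fst])
    moreover have "((\<lambda>p. h (snd p)) \<longlongrightarrow> Lp) (sequentially \<times>\<^sub>F sequentially)"
      by (rule filterlim_compose[OF that(2) filterlim_snd])
    ultimately have "((\<lambda>p. f (fst p) - h (snd p)) \<longlongrightarrow> Lm - Lp) (sequentially \<times>\<^sub>F sequentially)"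
      by (rule tendsto_diff)
    moreover have "(\<lambda>(M, N). f M - h N) = (\<lambda>p. f (fst p) - h (snd p))" by auto
    ultimately show ?thesis by simp
  qed
  {
    assume H: "((\<lambda>(M, N). f M - h N) \<longlongrightarrow> s) (sequentially \<times>\<^sub>F sequentially)"
    have ev: "\<exists>K. \<forall>m\<ge>K. \<forall>n\<ge>K. dist (f m - h n) s < e" if "e > 0" for e
    proof -
      have "eventually (\<lambda>p. dist ((\<lambda>(M, N). f M - h N) p) s < e) (sequentially \<times>\<^sub>F sequentially)"
        using tendstoD[OF H that] .
      then show ?thesis unfolding eventually_prod_sequentially by auto
    qed
    have cf: "Cauchy f"
    proof (rule metric_CauchyI)
      fix e :: real assume "e > 0"
      then obtain K where K: "\<forall>m\<ge>K. \<forall>n\<ge>K. dist (f m - h n) s < e/2" using ev[of "e/2"] by auto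
      show "\<exists>M. \<forall>m\<ge>M. \<forall>n\<ge>M. dist (f m) (f n) < e"
      proof (intro exI allI impI)
        fix m n assume "K \<le> m" "K \<le> n"
        then have a: "dist (f m - h K) s < e/2" "dist (f n - h K) s < e/2" using K by auto
        have "dist (f m) (f n) = norm ((f m - h K - s) - (f n - h K - s))"
          by (simp add: dist_norm)
        also have "\<dots> \<le> norm (f m - h K - s) + norm (f n - h K - s)"
          by (rule norm_triangle_ineq4)
        also have "\<dots> = dist (f m - h K) s + dist (f n - h K) s" by (simp add: dist_norm)
        finally have "dist (f m) (f n) \<le> dist (f m - h K) s + dist (f n - h K) s" .
        then show "dist (f m) (f n) < e" using a by linarith
      qed
    qed
    have ch: "Cauchy h"
    proof (rule metric_CauchyI)
      fix e :: real assume "e > 0"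
      then obtain K where K: "\<forall>m\<ge>K. \<forall>n\<ge>K. dist (f m - h n) s < e/2" using ev[of "e/2"] by auto
      show "\<exists>M. \<forall>m\<ge>M. \<forall>n\<ge>M. dist (h m) (h n) < e"
      proof (intro exI allI impI)
        fix m n assume "K \<le> m" "K \<le> n"
        then have a: "dist (f K - h m) s < e/2" "dist (f K - h n) s < e/2" using K by auto
        have "dist (h m) (h n) = norm ((f K - h n - s) - (f K - h m - s))"
          by (simp add: dist_norm algebra_simps)
        also have "\<dots> \<le> norm (f K - h n - s) + norm (f K - h m - s)"
          by (rule norm_triangle_ineq4)
        also have "\<dots> = dist (f K - h m) s + dist (f K - h n) s" by (simp add: dist_norm)
        finally have "dist (h m) (h n) \<le> dist (f K - h m) s + dist (f K - h n) s" .
        then show "dist (h m) (h n) < e" using a by linarith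
      qed
    qed
    obtain Lm where Lm: "f \<longlonglongrightarrow> Lm" using cf Cauchy_convergent_iff convergent_def by blast
    obtain Lp where Lp: "h \<longlonglongrightarrow> Lp" using ch Cauchy_convergent_iff convergent_def by blast
    have "s = Lm - Lp"
      using tendsto_unique[OF _ H prod_lim[OF Lm Lp]] by (simp add: prod_filter_eq_bot)
    then show "\<exists>Lm Lp. f \<longlonglongrightarrow> Lm \<and> h \<longlonglongrightarrow> Lp \<and> s = Lm - Lp" using Lm Lp by blast
  }
  show "\<exists>Lm Lp. f \<longlonglongrightarrow> Lm \<and> h \<longlonglongrightarrow> Lp \<and> s = Lm - Lp \<Longrightarrow>
      ((\<lambda>(M, N). f M - h N) \<longlongrightarrow> s) (sequentially \<times>\<^sub>F sequentially)"
    using prod_lim by blast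
qed

lemma lim_top:
  fixes b :: "int \<Rightarrow> complex"
  shows "(b \<longlongrightarrow> L) at_top \<longleftrightarrow> ((\<lambda>N. b (int N + 1)) \<longlonglongrightarrow> L)"
proof -
  have "((\<lambda>N. b (int N + 1)) \<longlonglongrightarrow> L) \<longleftrightarrow> ((\<lambda>N. b (int N)) \<longlonglongrightarrow> L)"
    using filterlim_sequentially_Suc[of "\<lambda>N. b (int N)" "nhds L"] by (simp add: add.commute)
  moreover have "(b \<longlongrightarrow> L) at_top \<longleftrightarrow> ((\<lambda>N. b (int N)) \<longlonglongrightarrow> L)"
    using filterlim_int_of_nat_at_topD[of b] filterlim_compose[OF _ filterlim_int_sequentially, of b]
    by blast
  ultimately show ?thesis by simp
qed

lemma lim_bot:
  fixes b :: "int \<Rightarrow> complex"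
  shows "(b \<longlongrightarrow> L) at_bot \<longleftrightarrow> ((\<lambda>M. b (- int M)) \<longlonglongrightarrow> L)"
proof -
  have "(b \<longlongrightarrow> L) at_bot \<longleftrightarrow> ((\<lambda>j. b (-j)) \<longlongrightarrow> L) at_top"
    unfolding filterlim_def at_bot_mirror filtermap_filtermap by (simp add: o_def)
  also have "\<dots> \<longleftrightarrow> ((\<lambda>M. b (- int M)) \<longlonglongrightarrow> L)"
    using filterlim_int_of_nat_at_topD[of "\<lambda>j. b (-j)"]
      filterlim_compose[OF _ filterlim_int_sequentially, of "\<lambda>j. b (-j)"]
    by blast
  finally show ?thesis .
qed

theorem theorem2p1:
  fixes g :: "real^'n \<Rightarrow> complex" and A :: "real^'n^'n"
  assumes "invertible A"
  shows "((\<forall>\<gamma>. \<gamma> \<noteq> 0 \<longrightarrow> bilateral_summable (\<lambda>j. g (mat_int_pow_apply A j \<gamma>)))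
            \<longrightarrow> (\<exists>\<phi> :: real^'n \<Rightarrow> complex. \<forall>\<gamma>. \<gamma> \<noteq> 0 \<longrightarrow> g \<gamma> = \<phi> \<gamma> - \<phi> (A *v \<gamma>)))
       \<and> (\<forall>\<phi> :: real^'n \<Rightarrow> complex. (\<forall>\<gamma>. \<gamma> \<noteq> 0 \<longrightarrow> g \<gamma> = \<phi> \<gamma> - \<phi> (A *v \<gamma>)) \<longrightarrow>
            (\<forall>\<gamma>. \<gamma> \<noteq> 0 \<longrightarrow>
               (bilateral_summable (\<lambda>j. g (mat_int_pow_apply A j \<gamma>)) \<longleftrightarrow>
                 ((\<exists>L. ((\<lambda>N::int. \<phi> (mat_int_pow_apply A N \<gamma>)) \<longlongrightarrow> L) at_top) \<and>
                  (\<exists>L. ((\<lambda>N::int. \<phi> (mat_int_pow_apply A N \<gamma>)) \<longlongrightarrow> L) at_bot)))))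
       \<and> (\<forall>\<phi> :: real^'n \<Rightarrow> complex. (\<forall>\<gamma>. \<gamma> \<noteq> 0 \<longrightarrow> g \<gamma> = \<phi> \<gamma> - \<phi> (A *v \<gamma>)) \<longrightarrow>
            ((\<forall>\<gamma>. \<gamma> \<noteq> 0 \<longrightarrow> bilateral_sums (\<lambda>j. g (mat_int_pow_apply A j \<gamma>)) 1) \<longleftrightarrow>
             (\<forall>\<gamma>. \<gamma> \<noteq> 0 \<longrightarrow>
                (\<exists>Lp Lm. ((\<lambda>N::int. \<phi> (mat_int_pow_apply A N \<gamma>)) \<longlongrightarrow> Lp) at_top \<and>
                         ((\<lambda>N::int. \<phi> (mat_int_pow_apply A N \<gamma>)) \<longlongrightarrow> Lm) at_bot \<and>
                         Lm - Lp = 1))))"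
proof -
  let ?T = "mat_int_pow_apply A"
  have key: "bilateral_sums (\<lambda>j. g (?T j \<gamma>)) s \<longleftrightarrow>
      (\<exists>Lm Lp. ((\<lambda>N::int. \<phi> (?T N \<gamma>)) \<longlongrightarrow> Lp) at_top \<and>
               ((\<lambda>N::int. \<phi> (?T N \<gamma>)) \<longlongrightarrow> Lm) at_bot \<and> s = Lm - Lp)"
    if hphi: "\<forall>\<gamma>. \<gamma> \<noteq> 0 \<longrightarrow> g \<gamma> = \<phi> \<gamma> - \<phi> (A *v \<gamma>)" and g0: "\<gamma> \<noteq> 0" for \<phi> \<gamma> s
  proof -
    define b where "b j = \<phi> (?T j \<gamma>)" for j
    have gb: "g (?T j \<gamma>) = b j - b (j+1)" for j
      using hphi T_nonzero[OF assms g0, of j] T_step[OF assms, of j \<gamma>] by (simp add: b_def)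
    have S: "(\<Sum>j\<in>{- int M..int N}. g (?T j \<gamma>)) = b (- int M) - b (int N + 1)" for M N
      unfolding gb by (rule telescope_int) simp
    have "bilateral_sums (\<lambda>j. g (?T j \<gamma>)) s \<longleftrightarrow>
        ((\<lambda>(M, N). b (- int M) - b (int N + 1)) \<longlongrightarrow> s) (sequentially \<times>\<^sub>F sequentially)"
      unfolding bilateral_sums_def S by simp
    also have "\<dots> \<longleftrightarrow> (\<exists>Lm Lp. (\<lambda>M. b (- int M)) \<longlonglongrightarrow> Lm \<and> (\<lambda>N. b (int N + 1)) \<longlonglongrightarrow> Lp \<and> s = Lm - Lp)"
      by (rule core)
    also have "\<dots> \<longleftrightarrow> (\<exists>Lm Lp. (b \<longlongrightarrow> Lp) at_top \<and> (b \<longlongrightarrow> Lm) at_bot \<and> s = Lm - Lp)"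
      by (simp only: lim_top[of b] lim_bot[of b] conj_commute conj_left_commute)
    finally show ?thesis unfolding b_def by (simp add: fun_eq_iff)
  qed
  have P1: "(\<forall>\<gamma>. \<gamma> \<noteq> 0 \<longrightarrow> bilateral_summable (\<lambda>j. g (?T j \<gamma>)))
            \<longrightarrow> (\<exists>\<phi> :: real^'n \<Rightarrow> complex. \<forall>\<gamma>. \<gamma> \<noteq> 0 \<longrightarrow> g \<gamma> = \<phi> \<gamma> - \<phi> (A *v \<gamma>))"
  proof
    assume H: "\<forall>\<gamma>. \<gamma> \<noteq> 0 \<longrightarrow> bilateral_summable (\<lambda>j. g (?T j \<gamma>))"
    define Q where "Q x N = (\<Sum>j\<le>N. g (?T (int j) x))" for x N
    define \<phi> where "\<phi> x = lim (Q x)" for x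
    have conv: "Q \<gamma> \<longlonglongrightarrow> \<phi> \<gamma>" if "\<gamma> \<noteq> 0" for \<gamma>
    proof -
      have "bilateral_summable (\<lambda>j. g (?T j \<gamma>))" using H that by blast
      then obtain s where s: "bilateral_sums (\<lambda>j. g (?T j \<gamma>)) s"
        unfolding bilateral_summable_def by blast
      define P where "P M = (\<Sum>j\<in>{- int M..-1}. g (?T j \<gamma>))" for M
      have "((\<lambda>(M, N). P M - (- Q \<gamma> N)) \<longlongrightarrow> s) (sequentially \<times>\<^sub>F sequentially)"
        using s unfolding bilateral_sums_def split_sum P_def Q_def by simp
      from core[THEN iffD1, OF this] obtain Lp where "(\<lambda>N. - Q \<gamma> N) \<longlonglongrightarrow> Lp" by blast
      then have "Q \<gamma> \<longlonglongrightarrow> - Lp" using tendsto_minus by fastforce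
      then show ?thesis unfolding \<phi>_def using limI by metis
    qed
    show "\<exists>\<phi> :: real^'n \<Rightarrow> complex. \<forall>\<gamma>. \<gamma> \<noteq> 0 \<longrightarrow> g \<gamma> = \<phi> \<gamma> - \<phi> (A *v \<gamma>)"
    proof (intro exI allI impI)
      fix \<gamma> :: "real^'n" assume g0: "\<gamma> \<noteq> 0"
      have eq: "Q (A *v \<gamma>) N = Q \<gamma> (Suc N) - g \<gamma>" for N
        unfolding Q_def sum.atMost_Suc_shift T_shift_nat by (simp add: T_zero)
      have "(\<lambda>N. Q \<gamma> (Suc N) - g \<gamma>) \<longlonglongrightarrow> \<phi> \<gamma> - g \<gamma>"
        by (rule tendsto_diff[OF LIMSEQ_Suc[OF conv[OF g0]] tendsto_const])
      then have "Q (A *v \<gamma>) \<longlonglongrightarrow> \<phi> \<gamma> - g \<gamma>" unfolding eq .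
      then have "\<phi> (A *v \<gamma>) = \<phi> \<gamma> - g \<gamma>" unfolding \<phi>_def by (rule limI)
      then show "g \<gamma> = \<phi> \<gamma> - \<phi> (A *v \<gamma>)" by simp
    qed
  qed
  show ?thesis
  proof (intro conjI P1 allI impI)
    fix \<phi> :: "real^'n \<Rightarrow> complex" and \<gamma> :: "real^'n"
    assume hphi: "\<forall>\<gamma>. \<gamma> \<noteq> 0 \<longrightarrow> g \<gamma> = \<phi> \<gamma> - \<phi> (A *v \<gamma>)" and g0: "\<gamma> \<noteq> 0"
    show "bilateral_summable (\<lambda>j. g (?T j \<gamma>)) \<longleftrightarrow>
                 ((\<exists>L. ((\<lambda>N::int. \<phi> (?T N \<gamma>)) \<longlongrightarrow> L) at_top) \<and>
                  (\<exists>L. ((\<lambda>N::int. \<phi> (?T N \<gamma>)) \<longlongrightarrow> L) at_bot))"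
    proof -
      have "bilateral_summable (\<lambda>j. g (?T j \<gamma>)) \<longleftrightarrow> (\<exists>s. bilateral_sums (\<lambda>j. g (?T j \<gamma>)) s)"
        unfolding bilateral_summable_def ..
      also have "\<dots> \<longleftrightarrow> (\<exists>s Lm Lp. ((\<lambda>N::int. \<phi> (?T N \<gamma>)) \<longlongrightarrow> Lp) at_top \<and>
               ((\<lambda>N::int. \<phi> (?T N \<gamma>)) \<longlongrightarrow> Lm) at_bot \<and> s = Lm - Lp)"
        by (simp only: key[OF hphi g0])
      finally show ?thesis by auto
    qed
  next
    fix \<phi> :: "real^'n \<Rightarrow> complex"
    assume hphi: "\<forall>\<gamma>. \<gamma> \<noteq> 0 \<longrightarrow> g \<gamma> = \<phi> \<gamma> - \<phi> (A *v \<gamma>)"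
    show "(\<forall>\<gamma>. \<gamma> \<noteq> 0 \<longrightarrow> bilateral_sums (\<lambda>j. g (?T j \<gamma>)) 1) \<longleftrightarrow>
             (\<forall>\<gamma>. \<gamma> \<noteq> 0 \<longrightarrow>
                (\<exists>Lp Lm. ((\<lambda>N::int. \<phi> (?T N \<gamma>)) \<longlongrightarrow> Lp) at_top \<and>
                         ((\<lambda>N::int. \<phi> (?T N \<gamma>)) \<longlongrightarrow> Lm) at_bot \<and>
                         Lm - Lp = 1))"
    proof -
      have eqv: "bilateral_sums (\<lambda>j. g (?T j \<gamma>)) 1 \<longleftrightarrow>
                (\<exists>Lp Lm. ((\<lambda>N::int. \<phi> (?T N \<gamma>)) \<longlongrightarrow> Lp) at_top \<and>
                         ((\<lambda>N::int. \<phi> (?T N \<gamma>)) \<longlongrightarrow> Lm) at_bot \<and>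
                         Lm - Lp = 1)" if "\<gamma> \<noteq> 0" for \<gamma>
        unfolding key[OF hphi that] by auto
      show ?thesis using eqv by blast
    qed
  qed
qed

end
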